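(* Let $r\ge 2$ and let $\mathcal{D}$ be the infinite lattice path defined in the context, with vertices $w_0=(0,0),w_1,w_2,\dots$ in order along the path, and for each $j\ge 0$ let $v_j$ be the leftmost vertex of $\mathcal{D}$ at height $j$ (the $j$-th northwest corner). Define $\mu$ on the vertices of $\mathcal{D}$ by $\mu(w_i)=v_i$. If $w_i$ has coordinates $(x,y)$, then $$\mu(w_i)=\big((r-1)x+(r-2)y,\;x+y\big).$$
   Context: Fix an integer $r\ge 2$. Define $c_1=0$, $c_2=1$, $c_n=rc_{n-1}-c_{n-2}$ for $n\ge 3$. For nonnegative integers $a,b$, the maximal Dyck path $\mathcal{P}(a,b)$ is the lattice path from $(0,0)$ to $(a,b)$ using unit north and east steps that never passes strictly above the line segment from $(0,0)$ to $(a,b)$ and is closest to that segment (i.e. it is the maximal such path in the partial order comparing heights at all vertices). For $n\ge 3$ let $\mathcal{D}_n=\mathcal{P}(c_{n-1}-c_{n-2},c_{n-2})$. Each $\mathcal{D}_{n}$ is a prefix of $\mathcal{D}_{n+1}$, and $\mathcal{D}$ denotes the infinite path $\bigcup_{n\ge 3}\mathcal{D}_n$; each $\mathcal{D}_n$ is identified with the prefix of $\mathcal{D}$ of the same length. The $i$-th vertex $w_i$ of $\mathcal{D}$ is the endpoint of its first $i$ steps. *)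

theory Defs
  imports Main
begin

text \<open>The sequence c_n (depending on the parameter r): c_1 = 0, c_2 = 1,
  c_n = r c_{n-1} - c_{n-2}.  The value at index 0 is irrelevant (set to 0).\<close>
fun cseq :: "int \<Rightarrow> nat \<Rightarrow> int" where
  "cseq r 0 = 0"
| "cseq r (Suc 0) = 0"
| "cseq r (Suc (Suc 0)) = 1"
| "cseq r (Suc (Suc (Suc n))) = r * cseq r (Suc (Suc n)) - cseq r (Suc n)"

text \<open>A lattice path is a list of unit steps: True = north step, False = east step.
  The k-th vertex is the endpoint of the first k steps.\<close>
definition vtx :: "bool list \<Rightarrow> nat \<Rightarrow> int \<times> int" where
  "vtx s k = (int (length (filter Not (take k s))), int (length (filter id (take k s))))"

definition below_path :: "nat \<Rightarrow> nat \<Rightarrow> bool list \<Rightarrow> bool" where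
  "below_path a b s \<longleftrightarrow> length s = a + b \<and> vtx s (a + b) = (int a, int b) \<and>
     (\<forall>k \<le> a + b. int a * snd (vtx s k) \<le> int b * fst (vtx s k))"

definition maxDyck :: "nat \<Rightarrow> nat \<Rightarrow> bool list" where
  "maxDyck a b = (THE s. below_path a b s \<and>
     (\<forall>t. below_path a b t \<longrightarrow> (\<forall>k \<le> a + b. snd (vtx t k) \<le> snd (vtx s k))))"

definition Dn :: "int \<Rightarrow> nat \<Rightarrow> bool list" where
  "Dn r n = maxDyck (nat (cseq r (n - 1) - cseq r (n - 2))) (nat (cseq r (n - 2)))"

text \<open>The i-th vertex w_i of the infinite path D = union of the D_n (each D_n a prefix
  of D_{n+1}): computed in the first D_n long enough to contain i steps.\<close>
definition wD :: "int \<Rightarrow> nat \<Rightarrow> int \<times> int" where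
  "wD r i = vtx (Dn r (LEAST n. 3 \<le> n \<and> i \<le> length (Dn r n))) i"

definition vD :: "int \<Rightarrow> nat \<Rightarrow> int \<times> int" where
  "vD r j = ((LEAST x. \<exists>k. wD r k = (x, int j)), int j)"

definition muD :: "int \<Rightarrow> nat \<Rightarrow> int \<times> int" where
  "muD r i = vD r i"

end

theory Submission
  imports Defs
begin

lemma div_char:
  fixes a b q :: int
  assumes "b > 0"
  shows "a div b = q \<longleftrightarrow> b * q \<le> a \<and> a < b * q + b"
proof
  assume h: "a div b = q"
  have e: "a = b * (a div b) + a mod b" by simp
  have "0 \<le> a mod b" "a mod b < b" using assms by auto
  then show "b * q \<le> a \<and> a < b * q + b" using e unfolding h[symmetric] by linarith
next
  assume "b * q \<le> a \<and> a < b * q + b"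
  then show "a div b = q" by (intro int_div_pos_eq[where r = "a - b*q"]) auto
qed

lemma c_inc:
  assumes "r \<ge> 2"
  shows "cseq r (Suc n) + 1 \<le> cseq r (Suc (Suc n)) \<and> 0 \<le> cseq r (Suc n)"
proof (induction n)
  case 0
  then show ?case by simp
next
  case (Suc n)
  let ?a = "cseq r (Suc n)" and ?b = "cseq r (Suc (Suc n))"
  have b0: "0 \<le> ?b" using Suc by linarith
  have "?b \<le> (r - 1) * ?b" using b0 assms by (simp add: mult_le_cancel_right1)
  moreover have "(r - 1) * ?b = r * ?b - ?b" by (simp add: algebra_simps)
  ultimately have "?b + 1 \<le> r * ?b - ?a" using Suc by linarith
  then show ?case using b0 by simp
qed

lemma c_mono:
  assumes "r \<ge> 2" "m \<le> n"
  shows "cseq r (Suc m) \<le> cseq r (Suc n)"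
proof -
  have "cseq r (Suc k) \<le> cseq r (Suc (Suc k))" for k
  proof -
    have "cseq r (Suc k) + 1 \<le> cseq r (Suc (Suc k))" using c_inc[OF assms(1), of k] by blast
    then show ?thesis by linarith
  qed
  then show ?thesis using lift_Suc_mono_le[of "\<lambda>k. cseq r (Suc k)"] assms(2) by blast
qed

lemma c_ge:
  assumes "r \<ge> 2"
  shows "int n \<le> cseq r (Suc (Suc n))"
proof (induction n)
  case 0
  then show ?case by simp
next
  case (Suc n)
  then show ?case using c_inc[OF assms, of "Suc n"] by simp
qed

lemma c_det:
  "cseq r (Suc (Suc n)) ^ 2 - cseq r (Suc (Suc (Suc n))) * cseq r (Suc n) = 1"
proof (induction n)
  case 0
  then show ?case by simp
next
  case (Suc n)
  then show ?case by (simp add: algebra_simps power2_eq_square)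
qed

section \<open>Heights of lists\<close>

definition ht :: "bool list \<Rightarrow> nat \<Rightarrow> nat" where
  "ht s k = length (filter id (take k s))"

lemma ht_Suc:
  assumes "k < length s"
  shows "ht s (Suc k) = ht s k + (if s ! k then 1 else 0)"
  using assms by (simp add: ht_def take_Suc_conv_app_nth)

lemma vtx_ht:
  assumes "k \<le> length s"
  shows "vtx s k = (int k - int (ht s k), int (ht s k))"
proof -
  have "length (filter Not (take k s)) + length (filter id (take k s)) = k"
    using sum_length_filter_compl[of id "take k s"] assms by (simp add: comp_def)
  then show ?thesis unfolding vtx_def ht_def by simp
qed

lemma ht_map:
  assumes g0: "g 0 = 0" and gs: "\<And>k. g k \<le> g (Suc k) \<and> g (Suc k) \<le> g k + 1"
    and "k \<le> n"
  shows "ht (map (\<lambda>k. g k < g (Suc k)) [0..<n]) k = g k"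
  using assms(3)
proof (induction k)
  case 0
  then show ?case by (simp add: ht_def g0)
next
  case (Suc k)
  then have "ht (map (\<lambda>k. g k < g (Suc k)) [0..<n]) (Suc k) =
     g k + (if g k < g (Suc k) then 1 else 0)"
    by (subst ht_Suc) auto
  also have "\<dots> = g (Suc k)" using gs[of k] by auto
  finally show ?case .
qed

lemma ht_uniq:
  assumes "length s = length t" "\<And>k. k \<le> length s \<Longrightarrow> ht s k = ht t k"
  shows "s = t"
proof (rule nth_equalityI)
  show "length s = length t" by fact
  fix k assume k: "k < length s"
  have "ht s (Suc k) = ht t (Suc k)" "ht s k = ht t k" using assms(2) k by auto
  then have "(if s ! k then 1 else 0) = (if t ! k then (1::nat) else 0)"
    using ht_Suc[OF k] ht_Suc[of k t] k assms(1) by simp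
  then show "s ! k = t ! k" by (auto split: if_splits)
qed

section \<open>Maximal Dyck paths\<close>

definition mdl :: "nat \<Rightarrow> nat \<Rightarrow> bool list" where
  "mdl a b = map (\<lambda>k. b * k div (a + b) < b * Suc k div (a + b)) [0..<a+b]"

lemma mdl_ht:
  assumes "k \<le> a + b"
  shows "ht (mdl a b) k = b * k div (a + b)"
  unfolding mdl_def
proof (rule ht_map[OF _ _ assms])
  show "b * 0 div (a + b) = 0" by simp
  fix k
  have "b * k div (a + b) \<le> b * Suc k div (a + b)" by (intro div_le_mono) simp
  moreover have "b * Suc k div (a + b) \<le> (b * k + (a + b)) div (a + b)"
    by (intro div_le_mono) simp
  moreover have "(b * k + (a + b)) div (a + b) \<le> b * k div (a + b) + 1"
  proof (cases "a + b = 0")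
    case False
    then show ?thesis using div_add_self2[of "a+b" "b*k"] by simp
  qed simp
  ultimately show "b * k div (a + b) \<le> b * Suc k div (a + b) \<and>
          b * Suc k div (a + b) \<le> b * k div (a + b) + 1" by linarith
qed

lemma below_ht:
  assumes "below_path a b t" "k \<le> a + b" "a + b > 0"
  shows "ht t k \<le> b * k div (a + b)"
proof -
  have len: "length t = a + b" using assms(1) by (simp add: below_path_def)
  define H where "H = ht t k"
  have v: "vtx t k = (int k - int H, int H)"
    unfolding H_def by (rule vtx_ht) (simp add: len assms(2))
  have "int a * snd (vtx t k) \<le> int b * fst (vtx t k)"
    using assms(1,2) unfolding below_path_def by blast
  then have i1: "int a * int H \<le> int b * (int k - int H)" unfolding v fst_conv snd_conv .
  have eq: "int b * (int k - int H) - int a * int H = int b * int k - int H * (int a + int b)"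
    by (simp add: algebra_simps)
  have "int H * (int a + int b) \<le> int b * int k" using i1 eq by linarith
  then have "int (H * (a + b)) \<le> int (b * k)" by (simp only: of_nat_mult of_nat_add)
  then have "H * (a + b) \<le> b * k" by (simp only: of_nat_le_iff)
  then show ?thesis unfolding H_def by (simp add: less_eq_div_iff_mult_less_eq[OF assms(3)])
qed

lemma mdl_below:
  assumes "a + b > 0"
  shows "below_path a b (mdl a b)"
  unfolding below_path_def
proof (intro conjI allI impI)
  show len: "length (mdl a b) = a + b" by (simp add: mdl_def)
  have hN: "ht (mdl a b) (a + b) = b" using mdl_ht[of "a+b" a b] assms by simp
  show "vtx (mdl a b) (a + b) = (int a, int b)"
    using vtx_ht[of "a+b" "mdl a b"] len hN by simp
  fix k assume k: "k \<le> a + b"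
  define H where "H = ht (mdl a b) k"
  have v: "vtx (mdl a b) k = (int k - int H, int H)"
    unfolding H_def by (rule vtx_ht) (simp add: len k)
  have h: "H = b * k div (a + b)" using mdl_ht k unfolding H_def by simp
  have "b * k div (a + b) * (a + b) \<le> b * k" by (rule div_times_less_eq_dividend)
  then have "H * (a + b) \<le> b * k" unfolding h .
  then have "int (H * (a + b)) \<le> int (b * k)" by (simp only: of_nat_le_iff)
  then have ineq: "int H * (int a + int b) \<le> int b * int k" by (simp only: of_nat_mult of_nat_add)
  have eq: "int b * (int k - int H) - int a * int H = int b * int k - int H * (int a + int b)"
    by (simp add: algebra_simps)
  show "int a * snd (vtx (mdl a b) k) \<le> int b * fst (vtx (mdl a b) k)"
    unfolding v fst_conv snd_conv using eq ineq by linarith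
qed

lemma maxDyck_eq:
  assumes "a + b > 0"
  shows "maxDyck a b = mdl a b"
  unfolding maxDyck_def
proof (rule the1_equality)
  let ?P = "\<lambda>s. below_path a b s \<and>
     (\<forall>t. below_path a b t \<longrightarrow> (\<forall>k \<le> a + b. snd (vtx t k) \<le> snd (vtx s k)))"
  have len: "length (mdl a b) = a + b" by (simp add: mdl_def)
  have Pm: "?P (mdl a b)"
  proof (intro conjI allI impI)
    show "below_path a b (mdl a b)" using mdl_below assms .
    fix t k assume t: "below_path a b t" and k: "k \<le> a + b"
    have lt: "length t = a + b" using t by (simp add: below_path_def)
    show "snd (vtx t k) \<le> snd (vtx (mdl a b) k)"
      using vtx_ht[of k t] vtx_ht[of k "mdl a b"] lt len k below_ht[OF t k assms] mdl_ht[OF k]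
      by simp
  qed
  have uniq: "s = mdl a b" if Ps: "?P s" for s
  proof (rule ht_uniq)
    have ls: "length s = a + b" using Ps by (simp add: below_path_def)
    then show "length s = length (mdl a b)" using len by simp
    fix k assume "k \<le> length s"
    then have k: "k \<le> a + b" using ls by simp
    have "snd (vtx (mdl a b) k) \<le> snd (vtx s k)" using Ps Pm k by blast
    then have "ht (mdl a b) k \<le> ht s k"
      using vtx_ht[of k s] vtx_ht[of k "mdl a b"] ls len k by simp
    moreover have "ht s k \<le> ht (mdl a b) k"
      using below_ht[OF _ k assms, of s] Ps mdl_ht[OF k] by simp
    ultimately show "ht s k = ht (mdl a b) k" by simp
  qed
  show "\<exists>!s. ?P s"
  proof (rule ex1I)
    show "?P (mdl a b)" by (fact Pm)
    fix s assume "?P s"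
    then show "s = mdl a b" by (rule uniq)
  qed
  show "?P (mdl a b)" by (fact Pm)
qed

section \<open>The paths D_n\<close>

definition Hf :: "int \<Rightarrow> nat \<Rightarrow> nat \<Rightarrow> int" where
  "Hf r m k = cseq r (Suc m) * int k div cseq r (Suc (Suc m))"

lemma Dn_props:
  assumes r: "r \<ge> 2"
  shows "length (Dn r (Suc (Suc (Suc m)))) = nat (cseq r (Suc (Suc m)))"
    and "int k \<le> cseq r (Suc (Suc m)) \<Longrightarrow>
         vtx (Dn r (Suc (Suc (Suc m)))) k = (int k - Hf r m k, Hf r m k)"
proof -
  let ?A = "cseq r (Suc m)" and ?B = "cseq r (Suc (Suc m))"
  have A0: "0 \<le> ?A" and AB: "?A + 1 \<le> ?B" using c_inc[OF r, of m] by auto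
  define a where "a = nat (?B - ?A)"
  define b where "b = nat ?A"
  have ab: "a + b = nat ?B" using A0 AB unfolding a_def b_def by simp
  have pos: "a + b > 0" using ab A0 AB by simp
  have D: "Dn r (Suc (Suc (Suc m))) = mdl a b"
    unfolding Dn_def a_def b_def using maxDyck_eq pos unfolding a_def b_def by simp
  have len: "length (mdl a b) = a + b" by (simp add: mdl_def)
  show "length (Dn r (Suc (Suc (Suc m)))) = nat ?B" using D len ab by simp
  assume k: "int k \<le> ?B"
  then have k': "k \<le> a + b" using ab by simp
  have "int (ht (mdl a b) k) = int (b * k div (a + b))" using mdl_ht[OF k'] by simp
  also have "\<dots> = ?A * int k div ?B" using ab A0 AB unfolding b_def zdiv_int by simp
  finally have h: "int (ht (mdl a b) k) = Hf r m k" unfolding Hf_def .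
  show "vtx (Dn r (Suc (Suc (Suc m)))) k = (int k - Hf r m k, Hf r m k)"
    using vtx_ht[of k "mdl a b"] len k' D h by simp
qed

lemma prefix_arith:
  fixes A B C k q :: int
  assumes "B > 0" "C > B" "0 \<le> k" "k \<le> B" "B * B = C * A + 1"
    "B * q \<le> A * k" "A * k < B * q + B"
  shows "C * q \<le> B * k \<and> B * k < C * q + C"
proof
  have "C * (B * q) \<le> C * (A * k)" using assms by (intro mult_left_mono) auto
  also have "C * (A * k) = (B * B - 1) * k" using assms(5) by (simp add: algebra_simps)
  also have "\<dots> = B * (B * k) - k" by (simp add: algebra_simps)
  also have "\<dots> \<le> B * (B * k)" using assms by simp
  finally have "B * (C * q) \<le> B * (B * k)" by (simp add: algebra_simps)
  then show "C * q \<le> B * k" using assms(1) by simp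
  have "C * (A * k) \<le> C * (B * q + B - 1)" using assms by (intro mult_left_mono) auto
  moreover have "B * (B * k) = C * (A * k) + k"
  proof -
    have "B * (B * k) = (B * B) * k" by (simp add: mult.assoc)
    also have "\<dots> = (C * A + 1) * k" using assms(5) by simp
    also have "\<dots> = C * (A * k) + k" by (simp add: algebra_simps)
    finally show ?thesis .
  qed
  ultimately have "B * (B * k) \<le> C * (B * q + B - 1) + k" by linarith
  also have "\<dots> < B * (C * q + C)" using assms by (simp add: algebra_simps)
  finally show "B * k < C * q + C" using assms(1) by simp
qed

lemma Hf_step:
  assumes r: "r \<ge> 2" and k: "int k \<le> cseq r (Suc (Suc m))"
  shows "Hf r (Suc m) k = Hf r m k"
proof -
  let ?A = "cseq r (Suc m)" and ?B = "cseq r (Suc (Suc m))" and ?C = "cseq r (Suc (Suc (Suc m)))"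
  have A0: "0 \<le> ?A" and AB: "?A + 1 \<le> ?B" using c_inc[OF r, of m] by auto
  have BC: "?B + 1 \<le> ?C" using c_inc[OF r, of "Suc m"] by auto
  have det: "?B * ?B = ?C * ?A + 1" using c_det[of r m] by (simp add: power2_eq_square)
  define q where "q = ?A * int k div ?B"
  have Bpos: "?B > 0" using A0 AB by simp
  have "?B * q \<le> ?A * int k \<and> ?A * int k < ?B * q + ?B"
    using div_char[OF Bpos] q_def by blast
  then have "?C * q \<le> ?B * int k \<and> ?B * int k < ?C * q + ?C"
    using prefix_arith[of ?B ?C "int k" ?A q] Bpos BC k det by auto
  then have "?B * int k div ?C = q" using div_char[of ?C] Bpos BC by auto
  then show ?thesis unfolding Hf_def q_def by simp
qed

lemma Hf_steps:
  assumes r: "r \<ge> 2" and mn: "m \<le> n" and k: "int k \<le> cseq r (Suc (Suc m))"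
  shows "Hf r n k = Hf r m k"
  using mn
proof (induction n rule: dec_induct)
  case base
  then show ?case by simp
next
  case (step n)
  have "cseq r (Suc (Suc m)) \<le> cseq r (Suc (Suc n))" using c_mono[OF r, of "Suc m" "Suc n"] step by simp
  then have "Hf r (Suc n) k = Hf r n k" using Hf_step[OF r] k by simp
  then show ?case using step by simp
qed

lemma wD_eq:
  assumes r: "r \<ge> 2" and k: "int k \<le> cseq r (Suc (Suc m))"
  shows "wD r k = (int k - Hf r m k, Hf r m k)"
proof -
  let ?P = "\<lambda>n. 3 \<le> n \<and> k \<le> length (Dn r n)"
  have Pm: "?P (Suc (Suc (Suc m)))" using Dn_props(1)[OF r, of m] k by simp
  define n0 where "n0 = (LEAST n. ?P n)"
  have P0: "?P n0" unfolding n0_def using Pm by (rule LeastI)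
  have le: "n0 \<le> Suc (Suc (Suc m))" unfolding n0_def using Pm by (rule Least_le)
  have "3 \<le> n0" using P0 by simp
  then have "n0 = Suc (Suc (Suc (n0 - 3)))" by arith
  then obtain m0 where m0: "n0 = Suc (Suc (Suc m0))" by blast
  have mm: "m0 \<le> m" using le m0 by simp
  have k0: "int k \<le> cseq r (Suc (Suc m0))"
    using P0 m0 Dn_props(1)[OF r, of m0] c_inc[OF r, of "Suc m0"] by (simp add: le_nat_iff)
  have "wD r k = vtx (Dn r n0) k" unfolding wD_def n0_def by simp
  also have "\<dots> = (int k - Hf r m0 k, Hf r m0 k)" using Dn_props(2)[OF r k0] m0 by simp
  also have "Hf r m0 k = Hf r m k" using Hf_steps[OF r mm k0] by simp
  finally show ?thesis .
qed

lemma L1: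
  fixes A B C k i y r :: int
  assumes "B > 0" "C > 0" "C = r * B - A" "B * y \<le> i * A \<and> i * A < B * y + B"
    "C * i \<le> B * k"
  shows "r * i - y \<le> k"
proof -
  have "B * (r * i - k) = i * (r * B - C) + (C * i - B * k)" by (simp add: algebra_simps)
  also have "\<dots> \<le> i * A" using assms(3,5) by simp
  also have "\<dots> < B * (y + 1)" using assms(4) by (simp add: algebra_simps)
  finally have "r * i - k < y + 1" using assms(1) by (simp add: mult_less_cancel_left_pos)
  then show ?thesis by simp
qed

lemma L2:
  fixes A B C i y r :: int
  assumes "B > 0" "C > B" "C = r * B - A" "B * y \<le> i * A \<and> i * A < B * y + B"
  shows "B * (r * i - y) div C = i"
proof -
  have e: "B * (r * i - y) = C * i + (i * A - B * y)" unfolding assms(3) by (simp add: algebra_simps)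
  show ?thesis using div_char[of C] assms e by auto
qed

theorem mainTheorem1:
  fixes r :: int and i :: nat and x y :: int
  assumes "r \<ge> 2"
    and "wD r i = (x, y)"
  shows "muD r i = ((r - 1) * x + (r - 2) * y, x + y)"
proof -
  have r: "r \<ge> 2" by fact
  have yH: "y = Hf r m i" and xH: "x = int i - y" if "i \<le> m" for m
  proof -
    have "int i \<le> cseq r (Suc (Suc m))" using c_ge[OF r, of m] that by simp
    then show "y = Hf r m i" "x = int i - y" using wD_eq[OF r] assms(2) by auto
  qed
  have ydiv: "cseq r (Suc (Suc m)) * y \<le> int i * cseq r (Suc m) \<and>
      int i * cseq r (Suc m) < cseq r (Suc (Suc m)) * y + cseq r (Suc (Suc m))"
    if "i \<le> m" for m
  proof -
    have "cseq r (Suc m) + 1 \<le> cseq r (Suc (Suc m))" "0 \<le> cseq r (Suc m)"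
      using c_inc[OF r, of m] by auto
    then have "cseq r (Suc (Suc m)) > 0" by simp
    moreover have "int i * cseq r (Suc m) div cseq r (Suc (Suc m)) = y"
      using yH[OF that] unfolding Hf_def by (simp add: mult.commute)
    ultimately show ?thesis using div_char by blast
  qed
  define K where "K = r * int i - y"
  have y0: "y \<le> int i"
  proof -
    have c: "cseq r (Suc i) + 1 \<le> cseq r (Suc (Suc i))" "0 \<le> cseq r (Suc i)"
      using c_inc[OF r, of i] by auto
    have "cseq r (Suc (Suc i)) * y \<le> int i * cseq r (Suc i)" using ydiv by simp
    also have "\<dots> \<le> int i * cseq r (Suc (Suc i))" using c by (intro mult_left_mono) auto
    finally have "cseq r (Suc (Suc i)) * y \<le> cseq r (Suc (Suc i)) * int i" by (simp add: mult.commute)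
    then show ?thesis using c by (simp add: mult_le_cancel_left_pos)
  qed
  have K0: "K \<ge> 0"
  proof -
    have "int i \<le> r * int i" using r by (simp add: mult_le_cancel_right1)
    then show ?thesis unfolding K_def using y0 by simp
  qed
  have ex: "wD r (nat K) = (K - int i, int i)"
  proof -
    define m where "m = i + nat K"
    let ?A = "cseq r (Suc m)" and ?B = "cseq r (Suc (Suc m))" and ?C = "cseq r (Suc (Suc (Suc m)))"
    have A0: "0 \<le> ?A" and AB: "?A + 1 \<le> ?B" using c_inc[OF r, of m] by auto
    have BC: "?B + 1 \<le> ?C" using c_inc[OF r, of "Suc m"] by auto
    have Crec: "?C = r * ?B - ?A" by simp
    have kC: "int (nat K) \<le> cseq r (Suc (Suc (Suc m)))"
      using c_ge[OF r, of "Suc m"] m_def by simp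
    have "Hf r (Suc m) (nat K) = ?B * K div ?C" unfolding Hf_def using K0 by simp
    also have "\<dots> = int i" unfolding K_def
      using L2[of ?B ?C r ?A y "int i"] A0 AB BC ydiv[of m] m_def by simp
    finally show ?thesis using wD_eq[OF r kC] K0 by simp
  qed
  have mn: "K - int i \<le> X" if w: "wD r k = (X, int i)" for k X
  proof -
    define m where "m = i + k"
    let ?A = "cseq r (Suc m)" and ?B = "cseq r (Suc (Suc m))" and ?C = "cseq r (Suc (Suc (Suc m)))"
    have A0: "0 \<le> ?A" and AB: "?A + 1 \<le> ?B" using c_inc[OF r, of m] by auto
    have BC: "?B + 1 \<le> ?C" using c_inc[OF r, of "Suc m"] by auto
    have Crec: "?C = r * ?B - ?A" by simp
    have kC: "int k \<le> cseq r (Suc (Suc (Suc m)))"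
      using c_ge[OF r, of "Suc m"] m_def by simp
    have h: "Hf r (Suc m) k = int i" and X: "X = int k - int i"
      using wD_eq[OF r kC] w by auto
    have "?B * int k div ?C = int i" using h unfolding Hf_def by simp
    then have "?C * int i \<le> ?B * int k" using div_char[of ?C] BC A0 AB by auto
    then have "r * int i - y \<le> int k"
      using L1[of ?B ?C r ?A y "int i" "int k"] A0 AB BC ydiv[of m] m_def by simp
    then show ?thesis unfolding K_def X by simp
  qed
  have L: "(LEAST X. \<exists>k. wD r k = (X, int i)) = K - int i"
    by (rule Least_equality) (use ex mn in auto)
  have "muD r i = (K - int i, int i)" unfolding muD_def vD_def L by simp
  also have "\<dots> = ((r - 1) * x + (r - 2) * y, x + y)"
  proof -
    have xe: "x = int i - y" using xH[of i] by simp
    show ?thesis by (simp add: xe K_def algebra_simps)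
  qed
  finally show ?thesis .
qed

end
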